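(* Every $\mathbb{F}_q$-subplane of $\mathrm{PG}(2,q^n)$ external to $l_\infty$ is equivalent, under the stabiliser of $l_\infty$ in $\mathrm{PGL}(3,q^n)$, to $\pi_{\omega,\lambda}$ for some $\omega,\lambda\in\mathbb{F}_{q^n}$ such that $1,\omega,\lambda$ are linearly independent over $\mathbb{F}_q$. Every $\mathbb{F}_q$-subplane tangent to $l_\infty$ is equivalent under this stabiliser to $\pi_{\omega,0}$ for some $\omega\in\mathbb{F}_{q^n}\setminus\mathbb{F}_q$.
   Context: Points of $\mathrm{PG}(2,q^n)$ are written $(a,b,c)_{\mathbb{F}_{q^n}}$; $l_\infty$ is the line $c=0$. An $\mathbb{F}_q$-subplane is a set $\{(su+tv+wz)_{\mathbb{F}_{q^n}}:(s,t,w)\in\mathbb{F}_q^3\setminus\{0\}\}$ for $\mathbb{F}_{q^n}$-independent $u,v,z\in\mathbb{F}_{q^n}^3$; it is external to $l_\infty$ if it has no point on $l_\infty$ and tangent if exactly one. For $\omega,\lambda\in\mathbb{F}_{q^n}$, $\pi_{\omega,\lambda}=\{(s,u,s\lambda+u\omega+t)_{\mathbb{F}_{q^n}}:(s,t,u)\in\mathbb{F}_q^3\setminus\{0\}\}$, the $\mathbb{F}_q$-subplane determined by the vectors $(1,0,\lambda),(0,1,\omega),(0,0,1)$. *)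

theory Defs
  imports "HOL-Analysis.Analysis"
begin

text \<open>Ambient field: a finite field 'a (playing F_{q^n}); F is a subfield (playing F_q).
 Vectors of 'a^3, matrices 'a^3^3. A projective point is the set of nonzero
 scalar multiples of a nonzero vector.\<close>

definition is_subfield :: "'a::field set \<Rightarrow> bool" where
  "is_subfield F \<longleftrightarrow> 0 \<in> F \<and> 1 \<in> F \<and>
     (\<forall>x\<in>F. \<forall>y\<in>F. x + y \<in> F \<and> x * y \<in> F) \<and>
     (\<forall>x\<in>F. - x \<in> F) \<and> (\<forall>x\<in>F. x \<noteq> 0 \<longrightarrow> inverse x \<in> F)"

definition ppoint :: "'a::field ^ 3 \<Rightarrow> ('a ^ 3) set" where
  "ppoint v = {c *s v | c. c \<noteq> 0}"

definition PG2 :: "('a::field ^ 3) set set" where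
  "PG2 = {ppoint v | v. v \<noteq> 0}"

definition l_inf :: "('a::field ^ 3) set set" where
  "l_inf = {ppoint v | v. v \<noteq> 0 \<and> v $ 3 = 0}"

definition indep3 :: "'a::field ^ 3 \<Rightarrow> 'a ^ 3 \<Rightarrow> 'a ^ 3 \<Rightarrow> bool" where
  "indep3 u v z \<longleftrightarrow> (\<forall>a b c. a *s u + b *s v + c *s z = 0 \<longrightarrow> a = 0 \<and> b = 0 \<and> c = 0)"

definition subplane_of :: "'a::field set \<Rightarrow> 'a ^ 3 \<Rightarrow> 'a ^ 3 \<Rightarrow> 'a ^ 3 \<Rightarrow> ('a ^ 3) set set" where
  "subplane_of F u v z =
     {ppoint (s *s u + t *s v + w *s z) | s t w. s \<in> F \<and> t \<in> F \<and> w \<in> F \<and> (s, t, w) \<noteq> (0, 0, 0)}"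

definition is_Fq_subplane :: "'a::field set \<Rightarrow> ('a ^ 3) set set \<Rightarrow> bool" where
  "is_Fq_subplane F S \<longleftrightarrow> (\<exists>u v z. indep3 u v z \<and> S = subplane_of F u v z)"

definition external_linf :: "('a::field ^ 3) set set \<Rightarrow> bool" where
  "external_linf S \<longleftrightarrow> S \<inter> l_inf = {}"

definition tangent_linf :: "('a::field ^ 3) set set \<Rightarrow> bool" where
  "tangent_linf S \<longleftrightarrow> card (S \<inter> l_inf) = 1"

definition pmap :: "'a::field ^ 3 ^ 3 \<Rightarrow> ('a ^ 3) set \<Rightarrow> ('a ^ 3) set" where
  "pmap M P = (\<lambda>x. M *v x) ` P"

definition equiv_linf_stab :: "('a::field ^ 3) set set \<Rightarrow> ('a ^ 3) set set \<Rightarrow> bool" where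
  "equiv_linf_stab S T \<longleftrightarrow>
     (\<exists>M :: 'a ^ 3 ^ 3. invertible M \<and> pmap M ` l_inf = l_inf \<and> pmap M ` S = T)"

definition pi_wl :: "'a::field set \<Rightarrow> 'a \<Rightarrow> 'a \<Rightarrow> ('a ^ 3) set set" where
  "pi_wl F om lam = {ppoint (vector [s, u, s * lam + u * om + t]) | s t u.
      s \<in> F \<and> t \<in> F \<and> u \<in> F \<and> (s, t, u) \<noteq> (0, 0, 0)}"

definition lin_indep3_over :: "'a::field set \<Rightarrow> 'a \<Rightarrow> 'a \<Rightarrow> 'a \<Rightarrow> bool" where
  "lin_indep3_over F x y z \<longleftrightarrow>
     (\<forall>a\<in>F. \<forall>b\<in>F. \<forall>c\<in>F. a * x + b * y + c * z = 0 \<longrightarrow> a = 0 \<and> b = 0 \<and> c = 0)"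

end

theory Submission imports Defs begin

definition colm :: "'a::field^3 \<Rightarrow> 'a^3 \<Rightarrow> 'a^3 \<Rightarrow> 'a^3^3" where
  "colm u v z = (\<chi> i j. if j = 1 then u$i else if j = 2 then v$i else z$i)"

lemma colm_mult: "colm u v z *v x = (x$1) *s u + (x$2) *s v + (x$3) *s z"
  by (simp add: vec_eq_iff colm_def matrix_vector_mult_def sum_3 mult.commute)

lemma colm_vec: "colm u v z *v vector[s,t,w] = s *s u + t *s v + w *s z"
  by (simp add: colm_mult)

lemma vec3_eq: "(x::'a^3) = y \<longleftrightarrow> x$1 = y$1 \<and> x$2 = y$2 \<and> x$3 = y$3"
  unfolding vec_eq_iff forall_3 by simp

lemma colm_inv:
  assumes "indep3 u v z" shows "invertible (colm u v z)"
proof -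
  have "inj ((*v) (colm u v z))"
  proof (rule injI)
    fix x y assume "colm u v z *v x = colm u v z *v y"
    then have "(x$1 - y$1) *s u + (x$2 - y$2) *s v + (x$3 - y$3) *s z = 0"
      by (simp add: colm_mult vec_eq_iff algebra_simps)
    then have "x$1 - y$1 = 0 \<and> x$2 - y$2 = 0 \<and> x$3 - y$3 = 0"
      using assms unfolding indep3_def by blast
    then show "x = y" by (simp add: vec3_eq)
  qed
  then show ?thesis
    using det_nz_iff_inj_gen[OF matrix_vector_mul_linear_gen, of "colm u v z"]
    by (simp add: matrix_of_matrix_vector_mul invertible_det_nz)
qed


lemma pmap_ppoint: "pmap M (ppoint x) = ppoint (M *v x)"
  unfolding pmap_def ppoint_def
proof (auto simp: vector_scalar_commute)
  fix c :: 'a assume "c \<noteq> 0"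
  then show "c *s (M *v x) \<in> (*v) M ` {c *s x |c. c \<noteq> 0}"
    by (intro image_eqI[of _ _ "c *s x"]) (auto simp: vector_scalar_commute)
qed


lemma key:
  fixes u v z :: "'a::field^3"
  assumes ind: "indep3 u v z" and z3: "z$3 \<noteq> 0"
  shows "equiv_linf_stab (subplane_of F u v z) (pi_wl F (v$3/z$3) (u$3/z$3))"
proof -
  define lam where "lam = u$3/z$3"
  define om where "om = v$3/z$3"
  define P where "P = colm u v z"
  define B where "B = colm (vector[1,0,lam]) (vector[0,1,om]) (vector[0,0,1::'a])"
  obtain Pi where PPi: "P ** Pi = mat 1" and PiP: "Pi ** P = mat 1"
    using colm_inv[OF ind] unfolding P_def invertible_def by blast
  define M where "M = B ** Pi"
  have Binv: "invertible B" unfolding B_def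
    by (rule colm_inv) (auto simp: indep3_def vec3_eq)
  have Piinv: "invertible Pi" using PPi PiP unfolding invertible_def by blast
  have Minv: "invertible M" unfolding M_def using Binv Piinv by (rule invertible_mult)
  then obtain N where MN: "M ** N = mat 1" and NM: "N ** M = mat 1" unfolding invertible_def by blast
  have MP: "M *v (P *v x) = B *v x" for x
    by (simp add: M_def matrix_vector_mul_assoc matrix_mul_assoc[symmetric] PiP)
  have B3: "(B *v x)$3 = (P *v x)$3 / z$3" for x
    using z3 by (simp add: B_def P_def colm_mult lam_def om_def field_simps)
  have M3: "(M *v y)$3 = y$3 / z$3" for y
  proof -
    have "y = P *v (Pi *v y)" by (simp add: matrix_vector_mul_assoc PPi)
    then show ?thesis using MP B3 by metis
  qed
  have Mnz: "M *v x \<noteq> 0" if "x \<noteq> 0" for x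
  proof
    assume "M *v x = 0"
    then have "N *v (M *v x) = 0" by simp
    then show False using that by (simp add: matrix_vector_mul_assoc NM)
  qed
  have L: "pmap M ` l_inf = l_inf"
  proof
    show "pmap M ` l_inf \<subseteq> l_inf"
      unfolding l_inf_def using Mnz M3 by (auto simp: pmap_ppoint)
  next
    show "l_inf \<subseteq> pmap M ` l_inf"
    proof
      fix Q assume "Q \<in> (l_inf :: ('a^3) set set)"
      then obtain w where w: "Q = ppoint w" "w \<noteq> 0" "w$3 = 0" unfolding l_inf_def by blast
      define y where "y = N *v w"
      have My: "M *v y = w" by (simp add: y_def matrix_vector_mul_assoc MN)
      have "y \<noteq> 0" using My w(2) by auto
      moreover have "y$3 = 0" using M3[of y] My w(3) z3 by simp
      ultimately have "ppoint y \<in> l_inf" unfolding l_inf_def by blast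
      moreover have "Q = pmap M (ppoint y)" using w My by (simp add: pmap_ppoint)
      ultimately show "Q \<in> pmap M ` l_inf" by blast
    qed
  qed
  have pt: "pmap M (ppoint (s *s u + t *s v + w *s z)) = ppoint (vector [s, t, s * lam + t * om + w])" for s t w
  proof -
    have "s *s u + t *s v + w *s z = P *v vector[s,t,w]" by (simp add: P_def colm_vec)
    then have "M *v (s *s u + t *s v + w *s z) = B *v vector[s,t,w]" using MP by simp
    also have "\<dots> = vector [s, t, s * lam + t * om + w]"
      by (simp add: B_def colm_vec vec3_eq)
    finally show ?thesis by (simp add: pmap_ppoint)
  qed
  have S: "pmap M ` subplane_of F u v z = pi_wl F om lam"
  proof
    show "pmap M ` subplane_of F u v z \<subseteq> pi_wl F om lam"
      unfolding subplane_of_def pi_wl_def using pt by fastforce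
  next
    show "pi_wl F om lam \<subseteq> pmap M ` subplane_of F u v z"
    proof
      fix Q assume "Q \<in> pi_wl F om lam"
      then obtain s t w where Q: "Q = ppoint (vector [s, w, s * lam + w * om + t])"
        "s \<in> F" "t \<in> F" "w \<in> F" "(s, t, w) \<noteq> (0, 0, 0)" unfolding pi_wl_def by blast
      have "ppoint (s *s u + w *s v + t *s z) \<in> subplane_of F u v z"
        unfolding subplane_of_def using Q by blast
      moreover have "Q = pmap M (ppoint (s *s u + w *s v + t *s z))" using pt Q(1) by simp
      ultimately show "Q \<in> pmap M ` subplane_of F u v z" by blast
    qed
  qed
  have "equiv_linf_stab (subplane_of F u v z) (pi_wl F om lam)"
    unfolding equiv_linf_stab_def using Minv L S by blast
  then show ?thesis by (simp only: om_def lam_def)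
qed


lemma sub_swap12: "subplane_of F u v z = subplane_of F v u z"
  unfolding subplane_of_def by (auto simp: add.commute) (metis add.commute)+

lemma sub_swap13: "subplane_of F u v z = subplane_of F z v u"
proof -
  have e: "s *s u + t *s v + w *s z = w *s z + t *s v + s *s u" for s t w :: 'a
    by (simp add: add_ac)
  have c: "(s,t,w) \<noteq> (0,0,0) \<longleftrightarrow> (w,t,s) \<noteq> (0,0,0)" for s t w :: 'a by auto
  show ?thesis unfolding subplane_of_def e using c by blast
qed

lemma ind_swap12: "indep3 u v z \<Longrightarrow> indep3 v u z"
  unfolding indep3_def by (metis add.commute)

lemma ind_swap13: "indep3 u v z \<Longrightarrow> indep3 z v u"
  unfolding indep3_def
proof (intro allI impI)
  fix a b c assume H: "\<forall>a b c. a *s u + b *s v + c *s z = 0 \<longrightarrow> a = 0 \<and> b = 0 \<and> c = 0"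
    and E: "a *s z + b *s v + c *s u = 0"
  have "c *s u + b *s v + a *s z = 0" using E by (simp add: add_ac)
  then show "a = 0 \<and> b = 0 \<and> c = 0" using H by blast
qed

lemma sub_shear:
  assumes F: "is_subfield F" and b: "b \<in> F" and c: "c \<in> F"
  shows "subplane_of F (u + b *s v + c *s z) v z = subplane_of F u v z"
proof -
  have eq: "s *s (u + b *s v + c *s z) + t *s v + w *s z
      = s *s u + (s*b + t) *s v + (s*c + w) *s z" for s t w
    by (simp add: vec_eq_iff algebra_simps)
  have cl: "x \<in> F \<Longrightarrow> y \<in> F \<Longrightarrow> x + y \<in> F" "x \<in> F \<Longrightarrow> y \<in> F \<Longrightarrow> x * y \<in> F" "x \<in> F \<Longrightarrow> - x \<in> F" for x y
    using F unfolding is_subfield_def by auto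
  show ?thesis
  proof
    show "subplane_of F (u + b *s v + c *s z) v z \<subseteq> subplane_of F u v z"
    proof
      fix Q assume "Q \<in> subplane_of F (u + b *s v + c *s z) v z"
      then obtain s t w where Q: "Q = ppoint (s *s (u + b *s v + c *s z) + t *s v + w *s z)"
        "s \<in> F" "t \<in> F" "w \<in> F" "(s,t,w) \<noteq> (0,0,0)" unfolding subplane_of_def by blast
      have "(s, s*b+t, s*c+w) \<noteq> (0,0,0)" using Q(5) by auto
      moreover have "s*b+t \<in> F" "s*c+w \<in> F" using cl Q b c by auto
      ultimately show "Q \<in> subplane_of F u v z" unfolding subplane_of_def Q(1) eq using Q(2) by blast
    qed
  next
    show "subplane_of F u v z \<subseteq> subplane_of F (u + b *s v + c *s z) v z"
    proof
      fix Q assume "Q \<in> subplane_of F u v z"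
      then obtain s t w where Q: "Q = ppoint (s *s u + t *s v + w *s z)"
        "s \<in> F" "t \<in> F" "w \<in> F" "(s,t,w) \<noteq> (0,0,0)" unfolding subplane_of_def by blast
      have e2: "s *s u + t *s v + w *s z = s *s (u + b *s v + c *s z) + (t - s*b) *s v + (w - s*c) *s z"
        by (simp add: eq)
      have "(s, t - s*b, w - s*c) \<noteq> (0,0,0)" using Q(5) by auto
      moreover have "t - s*b \<in> F" "w - s*c \<in> F" using cl Q b c by (metis diff_conv_add_uminus)+
      ultimately show "Q \<in> subplane_of F (u + b *s v + c *s z) v z"
        unfolding subplane_of_def Q(1) e2 using Q(2) by blast
    qed
  qed
qed

lemma ind_shear: "indep3 u v z \<Longrightarrow> indep3 (u + b *s v + c *s z) v z"
  unfolding indep3_def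
proof (intro allI impI)
  fix s t w assume H: "\<forall>a b c. a *s u + b *s v + c *s z = 0 \<longrightarrow> a = 0 \<and> b = 0 \<and> c = 0"
    and E: "s *s (u + b *s v + c *s z) + t *s v + w *s z = 0"
  have "s *s u + (s*b + t) *s v + (s*c + w) *s z = 0" using E by (simp add: vec_eq_iff algebra_simps)
  then show "s = 0 \<and> t = 0 \<and> w = 0" using H by fastforce
qed

lemma ppoint_eq: "ppoint x = ppoint y \<Longrightarrow> \<exists>c. c \<noteq> 0 \<and> x = c *s y"
proof -
  assume "ppoint x = ppoint y"
  moreover have "x \<in> ppoint x" unfolding ppoint_def by (rule CollectI, rule exI[of _ 1]) simp
  ultimately show ?thesis unfolding ppoint_def by blast
qed

lemma indep_nz: "indep3 u v z \<Longrightarrow> (s,t,w) \<noteq> (0,0,0) \<Longrightarrow> s *s u + t *s v + w *s z \<noteq> 0"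
  unfolding indep3_def by blast


lemma in_sub: "s \<in> F \<Longrightarrow> t \<in> F \<Longrightarrow> w \<in> F \<Longrightarrow> (s,t,w) \<noteq> (0,0,0) \<Longrightarrow>
   ppoint (s *s u + t *s v + w *s z) \<in> subplane_of F u v z"
  unfolding subplane_of_def by blast

lemma in_linf: "x \<noteq> 0 \<Longrightarrow> x$3 = 0 \<Longrightarrow> ppoint x \<in> l_inf"
  unfolding l_inf_def by blast

lemma sf: assumes "is_subfield F" shows "0 \<in> F" "1 \<in> F" "x \<in> F \<Longrightarrow> - x \<in> F"
  "x \<in> F \<Longrightarrow> y \<in> F \<Longrightarrow> x * y \<in> F" "x \<in> F \<Longrightarrow> x \<noteq> 0 \<Longrightarrow> inverse x \<in> F"
  using assms unfolding is_subfield_def by auto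

lemma external_case:
  fixes u v z :: "'a::field^3"
  assumes F: "is_subfield F" and ind: "indep3 u v z" and ext: "external_linf (subplane_of F u v z)"
  shows "\<exists>om lam. lin_indep3_over F 1 om lam \<and> equiv_linf_stab (subplane_of F u v z) (pi_wl F om lam)"
proof -
  have noint: "s \<in> F \<Longrightarrow> t \<in> F \<Longrightarrow> w \<in> F \<Longrightarrow> (s,t,w) \<noteq> (0,0,0) \<Longrightarrow>
     (s *s u + t *s v + w *s z)$3 \<noteq> 0" for s t w
    using in_sub[of s F t w u v z] in_linf indep_nz[OF ind] ext unfolding external_linf_def by blast
  have z3: "z$3 \<noteq> 0" using noint[of 0 0 1] sf[OF F] by simp
  have "lin_indep3_over F 1 (v$3/z$3) (u$3/z$3)"
    unfolding lin_indep3_over_def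
  proof (intro ballI impI)
    fix a b c assume abc: "a \<in> F" "b \<in> F" "c \<in> F" and e: "a * 1 + b * (v$3/z$3) + c * (u$3/z$3) = 0"
    have "(c *s u + b *s v + a *s z)$3 = 0" using e z3 by (simp add: field_simps)
    then show "a = 0 \<and> b = 0 \<and> c = 0" using noint[OF abc(3,2,1)] by auto
  qed
  then show ?thesis using key[OF ind z3] by blast
qed

lemma tangent_core:
  fixes u v z :: "'a::{field,finite}^3"
  assumes F: "is_subfield F" and ind: "indep3 u v z" and u3: "u$3 = 0"
    and tan: "tangent_linf (subplane_of F u v z)"
  shows "\<exists>\<omega>. \<omega> \<notin> F \<and> equiv_linf_stab (subplane_of F u v z) (pi_wl F \<omega> 0)"
proof -
  let ?S = "subplane_of F u v z"
  have A: "t = 0 \<and> w = 0" if tw: "t \<in> F" "w \<in> F" "t * v$3 + w * z$3 = 0" for t w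
  proof (rule ccontr)
    assume nz: "\<not> (t = 0 \<and> w = 0)"
    have p1: "ppoint u \<in> ?S \<inter> l_inf"
      using in_sub[of 1 F 0 0 u v z] in_linf[of u] indep_nz[OF ind, of 1 0 0] sf[OF F] u3 by auto
    have p2: "ppoint (t *s v + w *s z) \<in> ?S \<inter> l_inf"
      using in_sub[of 0 F t w u v z] in_linf[of "t *s v + w *s z"] indep_nz[OF ind, of 0 t w] sf[OF F] tw nz
      by (auto simp: mult.commute)
    have ne: "ppoint u \<noteq> ppoint (t *s v + w *s z)"
    proof
      assume "ppoint u = ppoint (t *s v + w *s z)"
      then obtain c where "u = c *s (t *s v + w *s z)" using ppoint_eq by blast
      then have "1 *s u + (- (c*t)) *s v + (- (c*w)) *s z = 0" by (simp add: vec_eq_iff algebra_simps)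
      then have "(1::'a) = 0" using ind unfolding indep3_def by blast
      then show False by simp
    qed
    have "card {ppoint u, ppoint (t *s v + w *s z)} \<le> card (?S \<inter> l_inf)"
      by (rule card_mono) (use p1 p2 in auto)
    then show False using ne tan unfolding tangent_linf_def by simp
  qed
  have z3: "z$3 \<noteq> 0" using A[of 0 1] sf[OF F] by auto
  have om: "v$3/z$3 \<notin> F"
  proof
    assume "v$3/z$3 \<in> F"
    then have "- (v$3/z$3) \<in> F" using sf[OF F] by auto
    moreover have "1 * v$3 + (- (v$3/z$3)) * z$3 = 0" using z3 by simp
    ultimately have "(1::'a) = 0" using A[of 1 "- (v$3/z$3)"] sf[OF F] by blast
    then show False by simp
  qed
  show ?thesis using key[OF ind z3] u3 om by auto
qed

lemma tangent_case:
  fixes u v z :: "'a::{field,finite}^3"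
  assumes F: "is_subfield F" and ind: "indep3 u v z"
    and tan: "tangent_linf (subplane_of F u v z)"
  shows "\<exists>\<omega>. \<omega> \<notin> F \<and> equiv_linf_stab (subplane_of F u v z) (pi_wl F \<omega> 0)"
proof -
  let ?S = "subplane_of F u v z"
  have "?S \<inter> l_inf \<noteq> {}" using tan unfolding tangent_linf_def by auto
  then obtain Q where "Q \<in> ?S" "Q \<in> l_inf" by blast
  then obtain s t w x where Q: "Q = ppoint (s *s u + t *s v + w *s z)"
    "s \<in> F" "t \<in> F" "w \<in> F" "(s,t,w) \<noteq> (0,0,0)" and x: "Q = ppoint x" "x \<noteq> 0" "x$3 = 0"
    unfolding subplane_of_def l_inf_def by blast
  obtain c where "s *s u + t *s v + w *s z = c *s x" using ppoint_eq Q(1) x(1) by metis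
  then have e: "(s *s u + t *s v + w *s z)$3 = 0" using x(3) by simp
  have red: "\<exists>\<omega>. \<omega> \<notin> F \<and> equiv_linf_stab (subplane_of F u v z) (pi_wl F \<omega> 0)"
    if ind: "indep3 u v z" and tan: "tangent_linf (subplane_of F u v z)"
       and st: "s \<in> F" "t \<in> F" "w \<in> F" "s \<noteq> 0" and e: "(s *s u + t *s v + w *s z)$3 = 0"
     for u v z :: "'a^3" and s t w
  proof -
    have b: "t / s \<in> F" "w / s \<in> F" using sf[OF F] st by (auto simp: divide_inverse)
    have eq: "subplane_of F (u + (t/s) *s v + (w/s) *s z) v z = subplane_of F u v z"
      by (rule sub_shear[OF F b])
    have "(u + (t/s) *s v + (w/s) *s z)$3 = 0" using e st(4) by (simp add: field_simps)
    from tangent_core[OF F ind_shear[OF ind] this] tan eq show ?thesis by simp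
  qed
  show ?thesis
  proof (cases "s \<noteq> 0")
    case True then show ?thesis by (rule red[OF ind tan Q(2,3,4) _ e])
  next
    case s0: False
    show ?thesis
    proof (cases "t \<noteq> 0")
      case True
      have "(t *s v + s *s u + w *s z)$3 = 0" using e by (simp add: add.commute)
      from red[OF ind_swap12[OF ind] _ Q(3,2,4) True this] tan show ?thesis
        by (simp add: sub_swap12[of F v u z])
    next
      case False
      then have w0: "w \<noteq> 0" using s0 Q(5) by auto
      have "(w *s z + t *s v + s *s u)$3 = 0" using e by (simp add: add.commute add.left_commute)
      from red[OF ind_swap13[OF ind] _ Q(4,3,2) w0 this] tan show ?thesis
        by (simp add: sub_swap13[of F z v u])
    qed
  qed
qed

theorem lemma3p2:
  fixes F :: "'a::{field,finite} set"
  assumes "is_subfield F"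
  shows "(\<forall>S. is_Fq_subplane F S \<and> external_linf S \<longrightarrow>
            (\<exists>om lam. lin_indep3_over F 1 om lam \<and> equiv_linf_stab S (pi_wl F om lam)))
       \<and> (\<forall>S. is_Fq_subplane F S \<and> tangent_linf S \<longrightarrow>
            (\<exists>\<omega>. \<omega> \<notin> F \<and> equiv_linf_stab S (pi_wl F \<omega> 0)))"
  using external_case[OF assms] tangent_case[OF assms] unfolding is_Fq_subplane_def by blast

end
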